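(* Let $m,n,k$ be positive integers with $(m,k-1)=1$ and $n=\mathrm{ind}_m(k)$, let $G=G(m,n,k)=\langle a,b;\ a^m=1,\ b^n=1,\ b^{-1}ab=a^k\rangle$ and let $S\subseteq\mathbb{Z}_m$ be a base. Then $\mathrm{orb}(x,S^* )$ is basic for every $x\in S^*$ if and only if $\Sigma_G(S)$ is complete. In this case $\Sigma_G(S)=\dot{\bigcup}_{x\in S^*}C(x,1)$ (a disjoint union) and $|\Sigma_G(S)|=m\,|S^*|$.
   Context: $\mathrm{ind}_m(k)$ is the least positive integer $d$ with $k^d\equiv 1\pmod m$. Elements of $G$ are written uniquely as $a^ib^j$, $i\in\mathbb{Z}_m$, $j\in\mathbb{Z}_n$; $k_t=k^t-1\pmod m$. Maps are written on the right and composed left to right. For $x,y\in\mathbb{Z}_m$, $\mu(x,y):G\to G$ is $(a^ib^j)\mu(x,y)=a^{xik^j-yk_j}$, and $C(x,y)=\{\mu(x,yz):z\in\mathbb{Z}_m\}$. For $S\subseteq\mathbb{Z}_m$, $I(S)$ is the set of elements of $S$ invertible in $\mathbb{Z}_m$ and $S^*$ is the multiplicative subsemigroup of $\mathbb{Z}_m$ generated by $S$. A base is $S\subseteq \mathbb{Z}_m$ with $0\in S$ and $I(S)\ne\varnothing$. $\Sigma_G(S)$ is the semigroup under composition generated by $\{\mu(s,z):s\in S,z\in\mathbb{Z}_m\}$. For $x\in S^*$, $Y(x)=\{s^*z: s^*\in S^*, z\in\mathbb{Z}_m, \exists s\in S,\ x\equiv ss^*\pmod m\}$, $\mathcal{F}_G(x,S)=\{C(x,y):y\in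 Y(x)\}$; this family is complete if $C(x,1)\in\mathcal{F}_G(x,S)$, and $\Sigma_G(S)$ is complete if every $x$-family ($x\in S^*$) is complete. $\mathrm{orb}(x,S^* )=\{xy:y\in I(S^* )\}$ is basic if it meets $S$. *)

theory Defs
  imports "HOL-Library.FuncSet" "HOL-Library.Disjoint_Sets" "HOL-Number_Theory.Cong"
begin

text \<open>Z_m is represented by the integers 0,...,m-1 (arithmetic reduced mod m).\<close>
definition Zm :: "nat \<Rightarrow> int set" where
  "Zm m = {0..<int m}"

text \<open>Elements a^i b^j of G(m,n,k), written uniquely as pairs (i,j), i in Z_m, j in Z_n.\<close>
definition Gcar :: "nat \<Rightarrow> nat \<Rightarrow> (int \<times> nat) set" where
  "Gcar m n = Zm m \<times> {..<n}"

definition is_ind :: "nat \<Rightarrow> nat \<Rightarrow> nat \<Rightarrow> bool" where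
  "is_ind m k d \<longleftrightarrow> 0 < d \<and> [k ^ d = 1] (mod m) \<and>
     (\<forall>e. 0 < e \<and> e < d \<longrightarrow> \<not> [k ^ e = 1] (mod m))"

definition kt :: "nat \<Rightarrow> nat \<Rightarrow> nat \<Rightarrow> int" where
  "kt m k t = (int k ^ t - 1) mod int m"

text \<open>mu(x,y): a^i b^j |-> a^(x i k^j - y k_j), as a map on the carrier of G.\<close>
definition mu :: "nat \<Rightarrow> nat \<Rightarrow> nat \<Rightarrow> int \<Rightarrow> int \<Rightarrow> (int \<times> nat \<Rightarrow> int \<times> nat)" where
  "mu m n k x y = (\<lambda>g\<in>Gcar m n. case g of (i, j) \<Rightarrow>
      ((x * i * int k ^ j - y * kt m k j) mod int m, 0))"

definition Cset :: "nat \<Rightarrow> nat \<Rightarrow> nat \<Rightarrow> int \<Rightarrow> int \<Rightarrow> (int \<times> nat \<Rightarrow> int \<times> nat) set" where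
  "Cset m n k x y = {mu m n k x ((y * z) mod int m) | z. z \<in> Zm m}"

definition Iset :: "nat \<Rightarrow> int set \<Rightarrow> int set" where
  "Iset m S = {s \<in> S. coprime s (int m)}"

inductive_set Sstar :: "nat \<Rightarrow> int set \<Rightarrow> int set" for m S where
  gen: "s \<in> S \<Longrightarrow> s \<in> Sstar m S"
| mult: "a \<in> Sstar m S \<Longrightarrow> b \<in> Sstar m S \<Longrightarrow> (a * b) mod int m \<in> Sstar m S"

definition is_base :: "nat \<Rightarrow> int set \<Rightarrow> bool" where
  "is_base m S \<longleftrightarrow> S \<subseteq> Zm m \<and> 0 \<in> S \<and> Iset m S \<noteq> {}"

text \<open>Sigma_G(S): semigroup under (left-to-right) composition generated by mu(s,z).\<close>
inductive_set SigmaG :: "nat \<Rightarrow> nat \<Rightarrow> nat \<Rightarrow> int set \<Rightarrow> (int \<times> nat \<Rightarrow> int \<times> nat) set"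
  for m n k S where
  gen: "s \<in> S \<Longrightarrow> z \<in> Zm m \<Longrightarrow> mu m n k s z \<in> SigmaG m n k S"
| comp: "f \<in> SigmaG m n k S \<Longrightarrow> g \<in> SigmaG m n k S \<Longrightarrow> compose (Gcar m n) g f \<in> SigmaG m n k S"

definition Yset :: "nat \<Rightarrow> int set \<Rightarrow> int \<Rightarrow> int set" where
  "Yset m S x = {(s' * z) mod int m | s' z. s' \<in> Sstar m S \<and> z \<in> Zm m \<and>
                   (\<exists>s\<in>S. [x = s * s'] (mod int m))}"

definition Fam :: "nat \<Rightarrow> nat \<Rightarrow> nat \<Rightarrow> int set \<Rightarrow> int \<Rightarrow> (int \<times> nat \<Rightarrow> int \<times> nat) set set" where
  "Fam m n k S x = {Cset m n k x y | y. y \<in> Yset m S x}"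

definition family_complete :: "nat \<Rightarrow> nat \<Rightarrow> nat \<Rightarrow> int set \<Rightarrow> int \<Rightarrow> bool" where
  "family_complete m n k S x \<longleftrightarrow> Cset m n k x 1 \<in> Fam m n k S x"

definition SigmaG_complete :: "nat \<Rightarrow> nat \<Rightarrow> nat \<Rightarrow> int set \<Rightarrow> bool" where
  "SigmaG_complete m n k S \<longleftrightarrow> (\<forall>x\<in>Sstar m S. family_complete m n k S x)"

definition orb :: "nat \<Rightarrow> int set \<Rightarrow> int \<Rightarrow> int set" where
  "orb m S x = {(x * y) mod int m | y. y \<in> Iset m (Sstar m S)}"

definition orb_basic :: "nat \<Rightarrow> int set \<Rightarrow> int \<Rightarrow> bool" where
  "orb_basic m S x \<longleftrightarrow> orb m S x \<inter> S \<noteq> {}"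

end

theory Submission imports Defs "HOL-Number_Theory.Number_Theory" begin

lemma Zm_mod: "0 < m \<Longrightarrow> x mod int m \<in> Zm m"
  by (simp add: Zm_def)

lemma Zm_mod_id: "x \<in> Zm m \<Longrightarrow> x mod int m = x"
  by (simp add: Zm_def)

lemma euler_int:
  assumes "coprime u (int m)" "u \<in> Zm m"
  shows "[u ^ totient m = 1] (mod int m)"
proof -
  have u: "u = int (nat u)" using assms(2) by (simp add: Zm_def)
  have "coprime (nat u) m" using assms(1) u by (metis coprime_int_iff)
  then have "[nat u ^ totient m = 1] (mod m)" by (rule euler_theorem)
  then have "[int (nat u ^ totient m) = int 1] (mod int m)" using cong_int_iff by blast
  then show ?thesis using u by (metis of_nat_1 of_nat_power)
qed

lemma Sstar_Zm: assumes "S \<subseteq> Zm m" "0 < m" "x \<in> Sstar m S" shows "x \<in> Zm m"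
  using assms(3) by (induction rule: Sstar.induct) (use assms in \<open>auto simp: Zm_mod\<close>)

lemma Sstar_pow: assumes "S \<subseteq> Zm m" "0 < m" "u \<in> Sstar m S"
  shows "(u ^ Suc j) mod int m \<in> Sstar m S"
proof (induction j)
  case 0
  then show ?case using assms Sstar_Zm Zm_mod_id by auto
next
  case (Suc j)
  have "((u ^ Suc j) mod int m * u) mod int m \<in> Sstar m S"
    using Sstar.mult[OF Suc assms(3)] .
  then show ?case by (metis mod_mult_left_eq mult.commute power_Suc)
qed

lemma mu_cong:
  assumes "[x = x'] (mod int m)" "[y = y'] (mod int m)"
  shows "mu m n k x y = mu m n k x' y'"
  unfolding mu_def
proof (rule restrict_ext)
  fix g assume "g \<in> Gcar m n"
  obtain i j where g: "g = (i, j)" by fastforce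
  have "[x * i * int k ^ j - y * kt m k j = x' * i * int k ^ j - y' * kt m k j] (mod int m)"
    using assms by (intro cong_diff cong_mult cong_refl) auto
  then show "(case g of (i, j) \<Rightarrow> ((x * i * int k ^ j - y * kt m k j) mod int m, 0)) =
         (case g of (i, j) \<Rightarrow> ((x' * i * int k ^ j - y' * kt m k j) mod int m, 0))"
    by (simp add: g cong_def)
qed

lemma mu_comp:
  assumes "0 < m" "0 < n"
  shows "compose (Gcar m n) (mu m n k x' y') (mu m n k x y) = mu m n k (x * x') (x' * y)"
proof (rule ext)
  fix g show "compose (Gcar m n) (mu m n k x' y') (mu m n k x y) g = mu m n k (x * x') (x' * y) g"
  proof (cases "g \<in> Gcar m n")
    case False then show ?thesis by (simp add: compose_def mu_def)
  next
    case gG: True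
  obtain i j where g: "g = (i, j)" by fastforce
  let ?c = "(x * i * int k ^ j - y * kt m k j) mod int m"
  have f: "mu m n k x y g = (?c, 0)" using gG g by (simp add: mu_def)
  have cG: "(?c, 0) \<in> Gcar m n" using assms by (simp add: Gcar_def Zm_def)
  have "mu m n k x' y' (?c, 0) = ((x' * ?c) mod int m, 0)"
    using cG by (simp add: mu_def kt_def)
  also have "(x' * ?c) mod int m = (x * x' * i * int k ^ j - x' * y * kt m k j) mod int m"
    by (simp add: mod_mult_right_eq algebra_simps)
  finally have e: "mu m n k x' y' (mu m n k x y g) = ((x * x' * i * int k ^ j - x' * y * kt m k j) mod int m, 0)"
    using f by simp
  have l: "compose (Gcar m n) (mu m n k x' y') (mu m n k x y) g = mu m n k x' y' (mu m n k x y g)"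
    using gG by (simp add: compose_def)
  have r: "mu m n k (x * x') (x' * y) g = ((x * x' * i * int k ^ j - x' * y * kt m k j) mod int m, 0)"
    using gG g by (simp add: mu_def algebra_simps)
  show ?thesis using l e r by simp
  qed
qed


lemma coprime_mod_int: "coprime (a mod int m) (int m) \<longleftrightarrow> coprime a (int m)"
  by (cases "m = 0") simp_all

lemma cong1_coprime: "[a * b = 1] (mod (m::int)) \<Longrightarrow> coprime a m"
  using coprime_iff_invertible_int by blast

context
  fixes m n k :: nat and S :: "int set"
  assumes m: "0 < m" and n: "0 < n" and k: "0 < k"
    and cop: "coprime m (k - 1)"
    and ind: "is_ind m k n"
    and base: "is_base m S"
begin

lemma SZ: "S \<subseteq> Zm m" using base by (simp add: is_base_def)

lemma n_gt1: "1 < m \<Longrightarrow> 1 < n"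
proof (rule ccontr)
  assume m1: "1 < m" and "\<not> 1 < n"
  then have "n = 1" using n by simp
  then have "[k = 1] (mod m)" using ind by (simp add: is_ind_def)
  then have "m dvd k - 1" using cong_to_1_nat by blast
  then have "m = 1" using cop by (metis coprime_common_divisor_nat dvd_refl)
  then show False using m1 by simp
qed

lemma mu_inj:
  assumes "mu m n k x y = mu m n k x' y'"
  shows "[x = x'] (mod int m) \<and> [y = y'] (mod int m)"
proof (cases "m = 1")
  case True then show ?thesis by (simp add: cong_def)
next
  case False
  then have m1: "1 < m" using m by simp
  then have n1: "1 < n" by (rule n_gt1)
  have "mu m n k x y (1,0) = mu m n k x' y' (1,0)" using assms by simp
  then have "x mod int m = x' mod int m" using m1 n by (simp add: mu_def Gcar_def Zm_def kt_def)
  then have cx: "[x = x'] (mod int m)" by (simp add: cong_def)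
  have "mu m n k x y (0,1) = mu m n k x' y' (0,1)" using assms by simp
  then have "(- (y * kt m k 1)) mod int m = (- (y' * kt m k 1)) mod int m"
    using m1 n1 by (simp add: mu_def Gcar_def Zm_def)
  then have "[- (y * kt m k 1) = - (y' * kt m k 1)] (mod int m)" by (simp add: cong_def)
  then have c1: "[y * kt m k 1 = y' * kt m k 1] (mod int m)" using cong_minus_minus_iff by blast
  have kk: "int (k - 1) = int k - 1" using k by simp
  have "coprime (int k - 1) (int m)" using cop kk by (metis coprime_commute coprime_int_iff)
  then have ck: "coprime (kt m k 1) (int m)" by (simp add: kt_def coprime_mod_int)
  have "[y = y'] (mod int m)" using c1 ck cong_mult_rcancel by blast
  then show ?thesis using cx by simp
qed

lemma tot: "0 < totient m" using m by simp

lemma unit_pow: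
  assumes "u \<in> Zm m" "coprime u (int m)"
  shows "[u ^ (2 * totient m) = 1] (mod int m)"
proof -
  have "[u ^ totient m = 1] (mod int m)" using euler_int assms by blast
  then have "[(u ^ totient m)^2 = 1^2] (mod int m)" by (rule cong_pow)
  then show ?thesis by (simp add: power_mult mult.commute)
qed

lemma Cset_unit:
  assumes "coprime y (int m)"
  shows "Cset m n k x y = Cset m n k x 1"
proof
  show "Cset m n k x y \<subseteq> Cset m n k x 1"
  proof
    fix f assume "f \<in> Cset m n k x y"
    then obtain z where "z \<in> Zm m" "f = mu m n k x ((y * z) mod int m)" by (auto simp: Cset_def)
    moreover have "(y * z) mod int m \<in> Zm m" using m by (rule Zm_mod)
    ultimately show "f \<in> Cset m n k x 1" unfolding Cset_def
      by (intro CollectI exI[of _ "(y * z) mod int m"]) simp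
  qed
next
  show "Cset m n k x 1 \<subseteq> Cset m n k x y"
  proof
    fix f assume "f \<in> Cset m n k x 1"
    then obtain z where "z \<in> Zm m" "f = mu m n k x ((1 * z) mod int m)" by (auto simp: Cset_def)
    obtain v where v: "[y * v = 1] (mod int m)" using cong_solve_coprime_int assms by blast
    have "[y * ((v * z) mod int m) = y * (v * z)] (mod int m)"
      by (intro cong_mult cong_refl) (simp add: cong_def)
    also have "y * (v * z) = (y * v) * z" by simp
    also have "[(y * v) * z = 1 * z] (mod int m)" using v by (intro cong_mult cong_refl)
    finally have "[(y * ((v * z) mod int m)) mod int m = (1 * z) mod int m] (mod int m)"
      by (simp add: cong_def)
    then have "f = mu m n k x ((y * ((v * z) mod int m)) mod int m)"
      using \<open>f = _\<close> mu_cong[OF cong_refl] by metis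
    moreover have "(v * z) mod int m \<in> Zm m" using m by (rule Zm_mod)
    ultimately show "f \<in> Cset m n k x y" unfolding Cset_def by blast
  qed
qed

lemma complete_unit:
  assumes "family_complete m n k S x"
  shows "\<exists>s\<in>S. \<exists>s'\<in>Sstar m S. [x = s * s'] (mod int m) \<and> coprime s' (int m)"
proof -
  obtain y where y: "y \<in> Yset m S x" "Cset m n k x y = Cset m n k x 1"
    using assms by (auto simp: family_complete_def Fam_def)
  obtain s' z s where sz: "y = (s' * z) mod int m" "s' \<in> Sstar m S" "z \<in> Zm m" "s \<in> S"
     "[x = s * s'] (mod int m)" using y(1) unfolding Yset_def by blast
  have "coprime s' (int m)"
  proof (cases "m = 1")
    case True then show ?thesis by simp
  next
    case False
    then have "1 \<in> Zm m" using m by (simp add: Zm_def)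
    then have "mu m n k x ((1 * 1) mod int m) \<in> Cset m n k x 1" unfolding Cset_def by blast
    then have "mu m n k x ((1 * 1) mod int m) \<in> Cset m n k x y" using y(2) by simp
    then obtain z1 where "mu m n k x ((1 * 1) mod int m) = mu m n k x ((y * z1) mod int m)"
      unfolding Cset_def by blast
    then have "[(1 * 1) mod int m = (y * z1) mod int m] (mod int m)" using mu_inj by blast
    then have "[1 = y * z1] (mod int m)" by (simp add: cong_def)
    moreover have "[y * z1 = s' * z * z1] (mod int m)" using sz(1)
      by (simp add: cong_def mod_mult_left_eq)
    ultimately have "[s' * (z * z1) = 1] (mod int m)" by (metis cong_sym cong_trans mult.assoc)
    then show ?thesis by (rule cong1_coprime)
  qed
  then show ?thesis using sz by blast
qed

lemma unit_complete:
  assumes "s \<in> S" "s' \<in> Sstar m S" "[x = s * s'] (mod int m)" "coprime s' (int m)"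
  shows "family_complete m n k S x"
proof -
  have "1 mod int m \<in> Zm m" using m by (rule Zm_mod)
  then have y: "(s' * (1 mod int m)) mod int m \<in> Yset m S x" unfolding Yset_def
    using assms by blast
  have "coprime ((s' * (1 mod int m)) mod int m) (int m)"
    using assms(4) m by (simp add: coprime_mod_int)
  then have "Cset m n k x ((s' * (1 mod int m)) mod int m) = Cset m n k x 1" by (rule Cset_unit)
  then show ?thesis using y unfolding family_complete_def Fam_def by blast
qed

lemma basic_iff: "orb_basic m S x \<longleftrightarrow> family_complete m n k S x" if x: "x \<in> Sstar m S"
proof
  assume "orb_basic m S x"
  then obtain u where u: "u \<in> Sstar m S" "coprime u (int m)" "(x * u) mod int m \<in> S"
    unfolding orb_basic_def orb_def Iset_def by blast
  define s' where "s' = u ^ Suc (2 * totient m - 2) mod int m"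
  have s': "s' \<in> Sstar m S" unfolding s'_def using Sstar_pow[OF SZ m u(1)] .
  have uZ: "u \<in> Zm m" using Sstar_Zm[OF SZ m u(1)] .
  have cs: "coprime s' (int m)" unfolding s'_def using u(2) by (simp add: coprime_mod_int)
  have e: "Suc (2 * totient m - 2) + 1 = 2 * totient m" using tot by linarith
  have "[(x * u) mod int m * s' = x * u * u ^ Suc (2 * totient m - 2)] (mod int m)"
    unfolding s'_def by (intro cong_mult) (simp_all add: cong_def)
  also have "x * u * u ^ Suc (2 * totient m - 2) = x * u ^ (2 * totient m)"
    using e by (metis mult.assoc mult.commute power_add power_one_right)
  also have "[x * u ^ (2 * totient m) = x * 1] (mod int m)"
    using unit_pow[OF uZ u(2)] by (intro cong_mult cong_refl)
  finally have "[x = (x * u) mod int m * s'] (mod int m)" by (simp add: cong_sym)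
  then show "family_complete m n k S x" using unit_complete[OF u(3) s' _ cs] by blast
next
  assume "family_complete m n k S x"
  then obtain s s' where ss: "s \<in> S" "s' \<in> Sstar m S" "[x = s * s'] (mod int m)" "coprime s' (int m)"
    using complete_unit by blast
  define u where "u = s' ^ Suc (2 * totient m - 2) mod int m"
  have u: "u \<in> Sstar m S" unfolding u_def using Sstar_pow[OF SZ m ss(2)] .
  have sZ: "s' \<in> Zm m" using Sstar_Zm[OF SZ m ss(2)] .
  have cu: "coprime u (int m)" unfolding u_def using ss(4) by (simp add: coprime_mod_int)
  have e: "Suc (2 * totient m - 2) + 1 = 2 * totient m" using tot by linarith
  have "[x * u = s * s' * s' ^ Suc (2 * totient m - 2)] (mod int m)"
    unfolding u_def using ss(3) by (intro cong_mult) (simp_all add: cong_def)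
  also have "s * s' * s' ^ Suc (2 * totient m - 2) = s * s' ^ (2 * totient m)"
    using e by (metis mult.assoc mult.commute power_add power_one_right)
  also have "[s * s' ^ (2 * totient m) = s * 1] (mod int m)"
    using unit_pow[OF sZ ss(4)] by (intro cong_mult cong_refl)
  finally have "(x * u) mod int m = s" using ss(1) SZ Zm_mod_id by (auto simp: cong_def)
  then have "s \<in> orb m S x" unfolding orb_def Iset_def using u cu by blast
  then show "orb_basic m S x" using ss(1) unfolding orb_basic_def by blast
qed

lemma sig_form: "f \<in> SigmaG m n k S \<Longrightarrow> \<exists>x\<in>Sstar m S. \<exists>y. f = mu m n k x y"
proof (induction rule: SigmaG.induct)
  case (gen s z) then show ?case using Sstar.gen by blast
next
  case (comp f g)
  then obtain x y x' y' where "x \<in> Sstar m S" "x' \<in> Sstar m S" "f = mu m n k x y" "g = mu m n k x' y'"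
    by blast
  then have "compose (Gcar m n) g f = mu m n k ((x * x') mod int m) (x' * y)"
    using mu_comp[OF m n] mu_cong by (metis cong_mod_right cong_refl)
  then show ?case using Sstar.mult \<open>x \<in> _\<close> \<open>x' \<in> _\<close> by blast
qed

lemma mu0: "b \<in> Sstar m S \<Longrightarrow> mu m n k b 0 \<in> SigmaG m n k S"
proof (induction rule: Sstar.induct)
  case (gen s)
  have "0 \<in> Zm m" using m by (simp add: Zm_def)
  then show ?case using SigmaG.gen gen by blast
next
  case (mult a b)
  have "compose (Gcar m n) (mu m n k b 0) (mu m n k a 0) = mu m n k ((a * b) mod int m) 0"
    using mu_comp[OF m n] mu_cong by (metis cong_mod_right cong_refl mult_zero_right)
  then show ?case using SigmaG.comp[OF mult.IH] by metis
qed

lemma main2: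
  assumes "SigmaG_complete m n k S"
  shows "SigmaG m n k S = (\<Union>x\<in>Sstar m S. Cset m n k x 1)"
proof
  show "SigmaG m n k S \<subseteq> (\<Union>x\<in>Sstar m S. Cset m n k x 1)"
  proof
    fix f assume "f \<in> SigmaG m n k S"
    then obtain x y where xy: "x \<in> Sstar m S" "f = mu m n k x y" using sig_form by blast
    then have "f = mu m n k x ((1 * (y mod int m)) mod int m)"
      using mu_cong by (metis cong_mod_right cong_refl mod_mod_trivial mult_1)
    moreover have "y mod int m \<in> Zm m" using m by (rule Zm_mod)
    ultimately show "f \<in> (\<Union>x\<in>Sstar m S. Cset m n k x 1)" using xy(1) unfolding Cset_def by blast
  qed
next
  show "(\<Union>x\<in>Sstar m S. Cset m n k x 1) \<subseteq> SigmaG m n k S"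
  proof
    fix f assume "f \<in> (\<Union>x\<in>Sstar m S. Cset m n k x 1)"
    then obtain x z0 where xz: "x \<in> Sstar m S" "z0 \<in> Zm m" "f = mu m n k x ((1 * z0) mod int m)"
      unfolding Cset_def by blast
    obtain s s' where ss: "s \<in> S" "s' \<in> Sstar m S" "[x = s * s'] (mod int m)" "coprime s' (int m)"
      using complete_unit assms xz(1) unfolding SigmaG_complete_def by blast
    obtain v where v: "[s' * v = 1] (mod int m)" using cong_solve_coprime_int ss(4) by blast
    define z where "z = (v * z0) mod int m"
    have zZ: "z \<in> Zm m" unfolding z_def using m by (rule Zm_mod)
    have "compose (Gcar m n) (mu m n k s' 0) (mu m n k s z) \<in> SigmaG m n k S"
      using SigmaG.comp[OF SigmaG.gen[OF ss(1) zZ] mu0[OF ss(2)]] .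
    moreover have "compose (Gcar m n) (mu m n k s' 0) (mu m n k s z) = mu m n k (s * s') (s' * z)"
      using mu_comp[OF m n] .
    moreover have "[s' * z = (1 * z0) mod int m] (mod int m)"
    proof -
      have "[s' * z = s' * (v * z0)] (mod int m)" unfolding z_def
        by (intro cong_mult cong_refl) (simp add: cong_def)
      also have "s' * (v * z0) = (s' * v) * z0" by simp
      also have "[(s' * v) * z0 = 1 * z0] (mod int m)" using v by (intro cong_mult cong_refl)
      finally show ?thesis by (simp add: cong_def)
    qed
    ultimately show "f \<in> SigmaG m n k S" using xz(3) mu_cong[OF cong_sym[OF ss(3)]] by metis
  qed
qed

lemma disj: "disjoint_family_on (\<lambda>x. Cset m n k x 1) (Sstar m S)"
  unfolding disjoint_family_on_def
proof (intro ballI impI)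
  fix a b assume ab: "a \<in> Sstar m S" "b \<in> Sstar m S" "a \<noteq> b"
  show "Cset m n k a 1 \<inter> Cset m n k b 1 = {}"
  proof (rule ccontr)
    assume "Cset m n k a 1 \<inter> Cset m n k b 1 \<noteq> {}"
    then obtain z z' where "mu m n k a ((1 * z) mod int m) = mu m n k b ((1 * z') mod int m)"
      unfolding Cset_def by blast
    then have "[a = b] (mod int m)" using mu_inj by blast
    then have "a = b" using Sstar_Zm[OF SZ m ab(1)] Sstar_Zm[OF SZ m ab(2)] Zm_mod_id
      by (metis cong_def)
    then show False using ab(3) by simp
  qed
qed

lemma card_C: "card (Cset m n k x 1) = m"
proof -
  have e: "Cset m n k x 1 = (\<lambda>z. mu m n k x ((1 * z) mod int m)) ` Zm m"
    unfolding Cset_def by blast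
  have "inj_on (\<lambda>z. mu m n k x ((1 * z) mod int m)) (Zm m)"
  proof
    fix z z' assume zz: "z \<in> Zm m" "z' \<in> Zm m"
      "mu m n k x ((1 * z) mod int m) = mu m n k x ((1 * z') mod int m)"
    then have "[(1 * z) mod int m = (1 * z') mod int m] (mod int m)" using mu_inj by blast
    then show "z = z'" using zz(1,2) Zm_mod_id by (simp add: cong_def)
  qed
  then have "card (Cset m n k x 1) = card (Zm m)" using e card_image by metis
  then show ?thesis by (simp add: Zm_def)
qed

lemma finSstar: "finite (Sstar m S)"
proof (rule finite_subset)
  show "Sstar m S \<subseteq> Zm m" using Sstar_Zm[OF SZ m] by blast
  show "finite (Zm m)" by (simp add: Zm_def)
qed

end

theorem theorem4p11:
  fixes m n k :: nat and S :: "int set"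
  assumes "0 < m" "0 < n" "0 < k"
    and "coprime m (k - 1)"
    and "is_ind m k n"
    and "is_base m S"
  shows "((\<forall>x\<in>Sstar m S. orb_basic m S x) \<longleftrightarrow> SigmaG_complete m n k S)
    \<and> (SigmaG_complete m n k S \<longrightarrow>
         SigmaG m n k S = (\<Union>x\<in>Sstar m S. Cset m n k x 1)
       \<and> disjoint_family_on (\<lambda>x. Cset m n k x 1) (Sstar m S)
       \<and> card (SigmaG m n k S) = m * card (Sstar m S))"
proof -
  have eq: "(\<forall>x\<in>Sstar m S. orb_basic m S x) \<longleftrightarrow> SigmaG_complete m n k S"
    unfolding SigmaG_complete_def using basic_iff[OF assms] by blast
  have "card (SigmaG m n k S) = m * card (Sstar m S)" if c: "SigmaG_complete m n k S"
  proof -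
    have "card (SigmaG m n k S) = (\<Sum>x\<in>Sstar m S. card (Cset m n k x 1))"
      unfolding main2[OF assms c]
    proof (rule card_UN_disjoint)
      show "finite (Sstar m S)" using finSstar[OF assms] .
      show "\<forall>i\<in>Sstar m S. finite (Cset m n k i 1)"
        using card_C[OF assms] assms(1) by (metis card_eq_0_iff less_irrefl)
      show "\<forall>i\<in>Sstar m S. \<forall>j\<in>Sstar m S. i \<noteq> j \<longrightarrow> Cset m n k i 1 \<inter> Cset m n k j 1 = {}"
        using disj[OF assms] unfolding disjoint_family_on_def by blast
    qed
    also have "\<dots> = m * card (Sstar m S)" using card_C[OF assms] by simp
    finally show ?thesis .
  qed
  then show ?thesis using eq main2[OF assms] disj[OF assms] by blast
qed

end
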